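(* Let $n$ be odd and let $g_0,g_1,g_2,g_3:\mathbb{V}_n\to\mathbb{F}_2$ be semi-bent functions with $g_0\oplus g_1\oplus g_2\oplus g_3=0$. Then $g_0g_1\oplus g_0g_2\oplus g_1g_2$ is semi-bent if and only if for every $u\in\mathbb{V}_n$: $\mathcal{W}_{g_i}(u)=0$ for an even number of indices $i\in\{0,1,2,3\}$, and if $\mathcal{W}_{g_i}(u)\neq0$ for all $i\in\{0,1,2,3\}$, then either $\mathcal{W}_{g_0}(u)\mathcal{W}_{g_1}(u)=\mathcal{W}_{g_2}(u)\mathcal{W}_{g_3}(u)$, or the number of $i$ with $\mathcal{W}_{g_i}(u)=2^{(n+1)/2}$ is $1$ or $3$ but it is not the case that $\mathcal{W}_{g_0}(u)=\mathcal{W}_{g_1}(u)=\mathcal{W}_{g_2}(u)$.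
   Context: $\mathbb{V}_n$ is an $n$-dimensional $\mathbb{F}_2$-vector space with inner product $u\cdot x$; $\mathcal{W}_g(u)=\sum_{x\in\mathbb{V}_n}(-1)^{g(x)\oplus u\cdot x}$. For odd $n$, $g$ is semi-bent if $\mathcal{W}_g(u)\in\{0,\pm2^{\frac{n+1}{2}}\}$ for all $u$. *)

theory Defs
  imports Main
begin

text \<open>V_n is modelled as the set of boolean lists of length n (F_2 = bool, addition = xor).\<close>
definition vecs :: "nat \<Rightarrow> bool list set" where
  "vecs n = {xs. length xs = n}"

definition bxor :: "bool \<Rightarrow> bool \<Rightarrow> bool" where
  "bxor a b = (a \<noteq> b)"

definition dotp :: "bool list \<Rightarrow> bool list \<Rightarrow> bool" where
  "dotp u x = foldr bxor (map2 (\<and>) u x) False"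

definition walsh :: "nat \<Rightarrow> (bool list \<Rightarrow> bool) \<Rightarrow> bool list \<Rightarrow> int" where
  "walsh n g u = (\<Sum>x\<in>vecs n. (-1) ^ (if bxor (g x) (dotp u x) then 1 else 0))"

definition semi_bent :: "nat \<Rightarrow> (bool list \<Rightarrow> bool) \<Rightarrow> bool" where
  "semi_bent n g \<longleftrightarrow>
     (\<forall>u\<in>vecs n. walsh n g u \<in> {0, 2 ^ ((n + 1) div 2), - (2 ^ ((n + 1) div 2))})"

end

theory Submission
  imports Defs
begin

lemma card4: "card {i. i < (4::nat) \<and> P i} = of_bool (P 0) + of_bool (P 1) + of_bool (P 2) + of_bool (P 3)"
proof -
  have "{i. i < (4::nat) \<and> P i} = (if P 0 then {0} else {}) \<union> (if P 1 then {1} else {}) \<union> (if P 2 then {2} else {}) \<union> (if P 3 then {3} else {})"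
    by (rule set_eqI) (auto simp: less_Suc_eq numeral_eq_Suc split: if_splits; metis gr0I)
  thus ?thesis by (cases "P 0"; cases "P 1"; cases "P 2"; cases "P 3") simp_all
qed

lemma walsh_maj:
  assumes "\<forall>x\<in>vecs n. bxor (bxor (bxor (g0 x) (g1 x)) (g2 x)) (g3 x) = False"
  shows "2 * walsh n (\<lambda>x. bxor (bxor (g0 x \<and> g1 x) (g0 x \<and> g2 x)) (g1 x \<and> g2 x)) u
     = walsh n g0 u + walsh n g1 u + walsh n g2 u - walsh n g3 u"
proof -
  have pt: "2 * ((-1::int) ^ (if bxor (bxor (bxor (g0 x \<and> g1 x) (g0 x \<and> g2 x)) (g1 x \<and> g2 x)) (dotp u x) then 1 else 0))
     = (-1) ^ (if bxor (g0 x) (dotp u x) then 1 else 0) + (-1) ^ (if bxor (g1 x) (dotp u x) then 1 else 0)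
     + (-1) ^ (if bxor (g2 x) (dotp u x) then 1 else 0) - (-1) ^ (if bxor (g3 x) (dotp u x) then 1 else 0)"
    if "x \<in> vecs n" for x
    using assms that
    by (cases "g0 x"; cases "g1 x"; cases "g2 x"; cases "g3 x"; cases "dotp u x") (auto simp: bxor_def)
  show ?thesis
    unfolding walsh_def sum_distrib_left
    by (simp add: pt sum.distrib sum_subtractf)
qed
lemma all_less_four: "(\<forall>i<(4::nat). P i) \<longleftrightarrow> P 0 \<and> P 1 \<and> P 2 \<and> P 3"
  by (auto simp: less_Suc_eq numeral_eq_Suc)

lemma arith4:
  fixes w0 w1 w2 w3 M :: int
  assumes M: "M > 0" and h: "w0 \<in> {0,M,-M}" "w1 \<in> {0,M,-M}" "w2 \<in> {0,M,-M}" "w3 \<in> {0,M,-M}"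
  shows "(w0+w1+w2-w3 \<in> {0, 2*M, -(2*M)}) \<longleftrightarrow>
     (even (of_bool (w0=0) + of_bool (w1=0) + of_bool (w2=0) + (of_bool (w3=0)::nat)) \<and>
      ((w0\<noteq>0 \<and> w1\<noteq>0 \<and> w2\<noteq>0 \<and> w3\<noteq>0) \<longrightarrow>
        (w0*w1 = w2*w3 \<or> ((of_bool (w0=M) + of_bool (w1=M) + of_bool (w2=M) + (of_bool (w3=M)::nat)) \<in> {1,3}
          \<and> \<not>(w0=w1 \<and> w1 = w2)))))"
  using h by (elim insertE emptyE; simp add: M M[THEN less_imp_neq] M[THEN less_imp_neq, symmetric])

theorem proposition4:
  fixes n :: nat and g :: "nat \<Rightarrow> bool list \<Rightarrow> bool"
  assumes "odd n"
    and "\<And>i. i < 4 \<Longrightarrow> semi_bent n (g i)"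
    and "\<forall>x\<in>vecs n. bxor (bxor (bxor (g 0 x) (g 1 x)) (g 2 x)) (g 3 x) = False"
  shows "semi_bent n (\<lambda>x. bxor (bxor (g 0 x \<and> g 1 x) (g 0 x \<and> g 2 x)) (g 1 x \<and> g 2 x))
    \<longleftrightarrow> (\<forall>u\<in>vecs n.
          even (card {i. i < 4 \<and> walsh n (g i) u = 0}) \<and>
          ((\<forall>i<4. walsh n (g i) u \<noteq> 0) \<longrightarrow>
             (walsh n (g 0) u * walsh n (g 1) u = walsh n (g 2) u * walsh n (g 3) u \<or>
              (card {i. i < 4 \<and> walsh n (g i) u = 2 ^ ((n + 1) div 2)} \<in> {1, 3} \<and>
               \<not> (walsh n (g 0) u = walsh n (g 1) u \<and> walsh n (g 1) u = walsh n (g 2) u)))))"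
proof -
  define M :: int where "M = 2 ^ ((n + 1) div 2)"
  have M: "M > 0" unfolding M_def by simp
  let ?f = "\<lambda>x. bxor (bxor (g 0 x \<and> g 1 x) (g 0 x \<and> g 2 x)) (g 1 x \<and> g 2 x)"
  have mem: "walsh n (g i) u \<in> {0,M,-M}" if "i < 4" "u \<in> vecs n" for i u
    using assms(2)[OF that(1)] that(2) unfolding semi_bent_def M_def by blast
  have key: "walsh n ?f u \<in> {0,M,-M} \<longleftrightarrow>
     (even (card {i. i < 4 \<and> walsh n (g i) u = 0}) \<and>
          ((\<forall>i<4. walsh n (g i) u \<noteq> 0) \<longrightarrow>
             (walsh n (g 0) u * walsh n (g 1) u = walsh n (g 2) u * walsh n (g 3) u \<or>
              (card {i. i < 4 \<and> walsh n (g i) u = 2 ^ ((n + 1) div 2)} \<in> {1, 3} \<and>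
               \<not> (walsh n (g 0) u = walsh n (g 1) u \<and> walsh n (g 1) u = walsh n (g 2) u)))))"
    (is "_ \<longleftrightarrow> ?R") if u: "u \<in> vecs n" for u
  proof -
    have w2: "2 * walsh n ?f u = walsh n (g 0) u + walsh n (g 1) u + walsh n (g 2) u - walsh n (g 3) u"
      by (rule walsh_maj[OF assms(3)])
    have "walsh n ?f u \<in> {0,M,-M} \<longleftrightarrow> 2 * walsh n ?f u \<in> {0, 2*M, -(2*M)}"
      by auto
    also have "\<dots> \<longleftrightarrow> walsh n (g 0) u + walsh n (g 1) u + walsh n (g 2) u - walsh n (g 3) u \<in> {0, 2*M, -(2*M)}"
      by (simp only: w2)
    also have "\<dots> \<longleftrightarrow> ?R"
      unfolding card4 M_def[symmetric]
      by (subst arith4[OF M mem[OF _ u] mem[OF _ u] mem[OF _ u] mem[OF _ u]]; simp add: all_less_four)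
    finally show ?thesis .
  qed
  show ?thesis
    unfolding semi_bent_def using key unfolding M_def by blast
qed

end
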